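(* Let $\Gamma$ be a finite connected $(G,s)$-geodesic-transitive graph with $s\ge2$ and $G\le\mathrm{Aut}(\Gamma)$. Let $1\ne N\trianglelefteq G$ be intransitive on $V(\Gamma)$. Suppose that $\Gamma$ is not isomorphic to the complete multipartite graph $K_{m[b]}$ for any $m\ge3$ and $b\ge2$. Then either (i) $N$ has exactly $2$ orbits on $V(\Gamma)$ and $\Gamma$ is bipartite; or (ii) $N$ has at least $3$ orbits on $V(\Gamma)$, $N$ is semiregular on $V(\Gamma)$, $\Gamma$ is a cover of $\Gamma_N$, and $\Gamma_N$ is $(G/N,s')$-geodesic-transitive where $s'=\min\{s,\mathrm{diam}(\Gamma_N)\}$.
   Context: $K_{m[b]}$ is the complete multipartite graph with $m$ parts each of size $b$. An $s$-geodesic is a path $(v_0,\dots,v_s)$ with $d(v_0,v_s)=s$; $\Gamma$ is $(G,s)$-geodesic-transitive if it has an $s$-geodesic and $G$ is transitive on the set of $i$-geodesics for each $i\le s$. For $N\trianglelefteq G$, $\Gamma_N$ is the graph whose vertices are the $N$-orbits, two distinct orbits adjacent iff some edge of $\Gamma$ joins them; $G/N$ acts on $\Gamma_N$. $\Gamma$ is a cover of $\Gamma_N$ if for each edge $\{B,C\}$ of $\Gamma_N$ and $v\in B$, $v$ has exactly one neighbour in $C$. Semiregular means all point stabilisers in $N$ are trivial. *)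

theory Defs
  imports Main
begin

definition simple_graph :: "'a set \<Rightarrow> ('a \<Rightarrow> 'a \<Rightarrow> bool) \<Rightarrow> bool" where
  "simple_graph V E \<longleftrightarrow> finite V \<and> (\<forall>u v. E u v \<longrightarrow> u \<in> V \<and> v \<in> V)
     \<and> (\<forall>u v. E u v \<longrightarrow> E v u) \<and> (\<forall>u. \<not> E u u)"

definition walk :: "'a set \<Rightarrow> ('a \<Rightarrow> 'a \<Rightarrow> bool) \<Rightarrow> 'a list \<Rightarrow> bool" where
  "walk V E xs \<longleftrightarrow> xs \<noteq> [] \<and> set xs \<subseteq> V \<and> (\<forall>i. Suc i < length xs \<longrightarrow> E (xs ! i) (xs ! Suc i))"

definition connected_graph :: "'a set \<Rightarrow> ('a \<Rightarrow> 'a \<Rightarrow> bool) \<Rightarrow> bool" where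
  "connected_graph V E \<longleftrightarrow> (\<forall>u\<in>V. \<forall>v\<in>V. \<exists>xs. walk V E xs \<and> hd xs = u \<and> last xs = v)"

definition gdist :: "'a set \<Rightarrow> ('a \<Rightarrow> 'a \<Rightarrow> bool) \<Rightarrow> 'a \<Rightarrow> 'a \<Rightarrow> nat" where
  "gdist V E u v = (LEAST n. \<exists>xs. walk V E xs \<and> hd xs = u \<and> last xs = v \<and> length xs = Suc n)"

definition diam :: "'a set \<Rightarrow> ('a \<Rightarrow> 'a \<Rightarrow> bool) \<Rightarrow> nat" where
  "diam V E = Max {gdist V E u v | u v. u \<in> V \<and> v \<in> V}"

definition geodesic :: "'a set \<Rightarrow> ('a \<Rightarrow> 'a \<Rightarrow> bool) \<Rightarrow> nat \<Rightarrow> 'a list \<Rightarrow> bool" where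
  "geodesic V E s xs \<longleftrightarrow> walk V E xs \<and> length xs = Suc s \<and> gdist V E (hd xs) (last xs) = s"

definition geodesic_transitive ::
  "'a set \<Rightarrow> ('a \<Rightarrow> 'a \<Rightarrow> bool) \<Rightarrow> ('a \<Rightarrow> 'a) set \<Rightarrow> nat \<Rightarrow> bool" where
  "geodesic_transitive V E G s \<longleftrightarrow> (\<exists>xs. geodesic V E s xs) \<and>
     (\<forall>i\<le>s. \<forall>xs ys. geodesic V E i xs \<and> geodesic V E i ys \<longrightarrow> (\<exists>g\<in>G. map g xs = ys))"

definition perm_on :: "'a set \<Rightarrow> ('a \<Rightarrow> 'a) \<Rightarrow> bool" where
  "perm_on V g \<longleftrightarrow> bij_betw g V V \<and> (\<forall>x. x \<notin> V \<longrightarrow> g x = x)"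

definition perm_group :: "'a set \<Rightarrow> ('a \<Rightarrow> 'a) set \<Rightarrow> bool" where
  "perm_group V G \<longleftrightarrow> id \<in> G \<and> (\<forall>g\<in>G. perm_on V g)
     \<and> (\<forall>g\<in>G. \<forall>h\<in>G. g \<circ> h \<in> G) \<and> (\<forall>g\<in>G. \<exists>h\<in>G. h \<circ> g = id)"

definition aut_group :: "'a set \<Rightarrow> ('a \<Rightarrow> 'a \<Rightarrow> bool) \<Rightarrow> ('a \<Rightarrow> 'a) set \<Rightarrow> bool" where
  "aut_group V E G \<longleftrightarrow> perm_group V G \<and> (\<forall>g\<in>G. \<forall>u\<in>V. \<forall>v\<in>V. E u v \<longleftrightarrow> E (g u) (g v))"

definition normal_subgroup :: "'a set \<Rightarrow> ('a \<Rightarrow> 'a) set \<Rightarrow> ('a \<Rightarrow> 'a) set \<Rightarrow> bool" where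
  "normal_subgroup V N G \<longleftrightarrow> perm_group V N \<and> N \<subseteq> G \<and>
     (\<forall>g\<in>G. \<forall>n\<in>N. \<exists>n'\<in>N. g \<circ> n = n' \<circ> g)"

definition orbit :: "('a \<Rightarrow> 'a) set \<Rightarrow> 'a \<Rightarrow> 'a set" where
  "orbit N x = (\<lambda>n. n x) ` N"

definition orbits :: "'a set \<Rightarrow> ('a \<Rightarrow> 'a) set \<Rightarrow> 'a set set" where
  "orbits V N = orbit N ` V"

definition transitive_on :: "'a set \<Rightarrow> ('a \<Rightarrow> 'a) set \<Rightarrow> bool" where
  "transitive_on V N \<longleftrightarrow> (\<forall>x\<in>V. \<forall>y\<in>V. \<exists>n\<in>N. n x = y)"

definition semiregular :: "'a set \<Rightarrow> ('a \<Rightarrow> 'a) set \<Rightarrow> bool" where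
  "semiregular V N \<longleftrightarrow> (\<forall>n\<in>N. \<forall>x\<in>V. n x = x \<longrightarrow> n = id)"

definition bipartite :: "'a set \<Rightarrow> ('a \<Rightarrow> 'a \<Rightarrow> bool) \<Rightarrow> bool" where
  "bipartite V E \<longleftrightarrow> (\<exists>A. A \<subseteq> V \<and> (\<forall>u v. E u v \<longrightarrow> (u \<in> A \<longleftrightarrow> v \<notin> A)))"

definition quot_edge :: "('a \<Rightarrow> 'a \<Rightarrow> bool) \<Rightarrow> 'a set \<Rightarrow> 'a set \<Rightarrow> bool" where
  "quot_edge E B C \<longleftrightarrow> B \<noteq> C \<and> (\<exists>u\<in>B. \<exists>v\<in>C. E u v)"

(* action of G (hence of G/N) on the N-orbits *)
definition quot_action :: "'a set \<Rightarrow> ('a \<Rightarrow> 'a) set \<Rightarrow> ('a \<Rightarrow> 'a) set \<Rightarrow> ('a set \<Rightarrow> 'a set) set" where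
  "quot_action V N G = (\<lambda>g. \<lambda>B. if B \<in> orbits V N then g ` B else B) ` G"

definition is_cover :: "'a set \<Rightarrow> ('a \<Rightarrow> 'a \<Rightarrow> bool) \<Rightarrow> ('a \<Rightarrow> 'a) set \<Rightarrow> bool" where
  "is_cover V E N \<longleftrightarrow> (\<forall>B\<in>orbits V N. \<forall>C\<in>orbits V N. quot_edge E B C \<longrightarrow>
      (\<forall>v\<in>B. card {w\<in>C. E v w} = 1))"

definition graph_iso :: "'a set \<Rightarrow> ('a \<Rightarrow> 'a \<Rightarrow> bool) \<Rightarrow> 'b set \<Rightarrow> ('b \<Rightarrow> 'b \<Rightarrow> bool) \<Rightarrow> bool" where
  "graph_iso V E W F \<longleftrightarrow> (\<exists>f. bij_betw f V W \<and> (\<forall>u\<in>V. \<forall>v\<in>V. E u v \<longleftrightarrow> F (f u) (f v)))"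

(* complete multipartite graph K_{m[b]}: vertex (i,j) = j-th vertex of part i *)
definition Kmb_V :: "nat \<Rightarrow> nat \<Rightarrow> (nat \<times> nat) set" where
  "Kmb_V m b = {0..<m} \<times> {0..<b}"

definition Kmb_E :: "nat \<times> nat \<Rightarrow> nat \<times> nat \<Rightarrow> bool" where
  "Kmb_E x y \<longleftrightarrow> fst x \<noteq> fst y"

end

theory Submission
  imports Defs
begin


lemma walk_Nil[simp]: "\<not> walk V E []"
  by (auto simp: walk_def)

lemma walk_single[simp]: "walk V E [x] \<longleftrightarrow> x \<in> V"
  by (auto simp: walk_def)

lemma walk_Cons2[simp]: "walk V E (x # y # zs) \<longleftrightarrow> x \<in> V \<and> E x y \<and> walk V E (y # zs)"
proof -
  have "(\<forall>i. Suc i < length (x # y # zs) \<longrightarrow> E ((x # y # zs) ! i) ((x # y # zs) ! Suc i))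
     \<longleftrightarrow> E x y \<and> (\<forall>i. Suc i < length (y # zs) \<longrightarrow> E ((y # zs) ! i) ((y # zs) ! Suc i))"
    (is "?A \<longleftrightarrow> ?B")
  proof
    assume A: ?A
    have "E x y" using A[rule_format, of 0] by simp
    moreover have "\<forall>i. Suc i < length (y # zs) \<longrightarrow> E ((y # zs) ! i) ((y # zs) ! Suc i)"
    proof (intro allI impI)
      fix i assume "Suc i < length (y # zs)"
      then show "E ((y # zs) ! i) ((y # zs) ! Suc i)" using A[rule_format, of "Suc i"] by simp
    qed
    ultimately show ?B by blast
  next
    assume B: ?B
    show ?A
    proof (intro allI impI)
      fix i assume i: "Suc i < length (x # y # zs)"
      show "E ((x # y # zs) ! i) ((x # y # zs) ! Suc i)"
      proof (cases i)
        case 0 then show ?thesis using B by simp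
      next
        case (Suc j)
        then have "Suc j < length (y # zs)" using i by simp
        then show ?thesis using B Suc by simp
      qed
    qed
  qed
  then show ?thesis unfolding walk_def by auto
qed

lemma walk_Cons: "walk V E (x # xs) \<Longrightarrow> xs \<noteq> [] \<Longrightarrow> walk V E xs"
  by (cases xs) auto


lemma walk_append: "ys \<noteq> [] \<Longrightarrow> walk V E ys \<Longrightarrow> walk V E zs \<Longrightarrow> E (last ys) (hd zs) \<Longrightarrow> walk V E (ys @ zs)"
proof (induction ys rule: list_nonempty_induct)
  case (single x)
  then show ?case by (cases zs) auto
next
  case (cons x xs)
  then show ?case by (cases xs) auto
qed

lemma walk_take: "walk V E xs \<Longrightarrow> 0 < k \<Longrightarrow> walk V E (take k xs)"
  unfolding walk_def by (auto dest: in_set_takeD)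

lemma walk_drop: "walk V E xs \<Longrightarrow> k < length xs \<Longrightarrow> walk V E (drop k xs)"
  unfolding walk_def by (auto dest: in_set_dropD)

lemma gdist_le: "walk V E xs \<Longrightarrow> hd xs = u \<Longrightarrow> last xs = v \<Longrightarrow> gdist V E u v \<le> length xs - 1"
  unfolding gdist_def
  by (rule Least_le) (auto simp: walk_def)

lemma gdist_walk: "\<exists>xs. walk V E xs \<and> hd xs = u \<and> last xs = v \<Longrightarrow>
   \<exists>xs. walk V E xs \<and> hd xs = u \<and> last xs = v \<and> length xs = Suc (gdist V E u v)"
proof -
  assume "\<exists>xs. walk V E xs \<and> hd xs = u \<and> last xs = v"
  then obtain xs where "walk V E xs \<and> hd xs = u \<and> last xs = v" by blast
  then have "\<exists>n xs. walk V E xs \<and> hd xs = u \<and> last xs = v \<and> length xs = Suc n"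
    by (metis Suc_pred length_greater_0_conv walk_def)
  then show ?thesis unfolding gdist_def by (rule LeastI_ex)
qed

lemma geodesic_iff: "geodesic V E i xs \<longleftrightarrow> walk V E xs \<and> length xs = Suc i \<and>
   (\<forall>ys. walk V E ys \<and> hd ys = hd xs \<and> last ys = last xs \<longrightarrow> Suc i \<le> length ys)"
proof
  assume g: "geodesic V E i xs"
  then have "walk V E xs" "length xs = Suc i" "gdist V E (hd xs) (last xs) = i"
    by (auto simp: geodesic_def)
  moreover have "Suc i \<le> length ys" if "walk V E ys" "hd ys = hd xs" "last ys = last xs" for ys
    using gdist_le[OF that] \<open>gdist V E (hd xs) (last xs) = i\<close> that(1) unfolding walk_def by (cases ys) auto
  ultimately show "walk V E xs \<and> length xs = Suc i \<and>
   (\<forall>ys. walk V E ys \<and> hd ys = hd xs \<and> last ys = last xs \<longrightarrow> Suc i \<le> length ys)" by blast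
next
  assume a: "walk V E xs \<and> length xs = Suc i \<and>
   (\<forall>ys. walk V E ys \<and> hd ys = hd xs \<and> last ys = last xs \<longrightarrow> Suc i \<le> length ys)"
  then have le: "gdist V E (hd xs) (last xs) \<le> i" using gdist_le[of V E xs] by auto
  obtain ys where "walk V E ys \<and> hd ys = hd xs \<and> last ys = last xs \<and> length ys = Suc (gdist V E (hd xs) (last xs))"
    using gdist_walk[of V E "hd xs" "last xs"] a by blast
  then have "i \<le> gdist V E (hd xs) (last xs)" using a by force
  then show "geodesic V E i xs" using le a unfolding geodesic_def by auto
qed

lemma geodesic_take:
  assumes g: "geodesic V E d xs" and k: "k \<le> d"
  shows "geodesic V E k (take (Suc k) xs)"
proof (cases "k = d")
  case True
  then show ?thesis using g by (simp add: geodesic_def)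
next
  case False
  then have kd: "k < d" using k by simp
  have w: "walk V E xs" and l: "length xs = Suc d" using g by (auto simp: geodesic_def)
  have lt: "length (take (Suc k) xs) = Suc k" using l kd by simp
  show ?thesis unfolding geodesic_iff
  proof (intro conjI allI impI)
    show "walk V E (take (Suc k) xs)" using walk_take[OF w] by simp
    show "length (take (Suc k) xs) = Suc k" by (rule lt)
    fix ys assume ys: "walk V E ys \<and> hd ys = hd (take (Suc k) xs) \<and> last ys = last (take (Suc k) xs)"
    show "Suc k \<le> length ys"
    proof (rule ccontr)
      assume "\<not> Suc k \<le> length ys"
      then have short: "length ys < Suc k" by simp
      let ?zs = "ys @ drop (Suc k) xs"
      have ne: "ys \<noteq> []" using ys by (auto simp: walk_def)
      have dne: "drop (Suc k) xs \<noteq> []" using l kd by simp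
      have lastys: "last ys = xs ! k" using ys lt l kd by (simp add: last_conv_nth take_Suc_conv_app_nth)
      have hdd: "hd (drop (Suc k) xs) = xs ! Suc k" using l kd by (simp add: hd_drop_conv_nth)
      have e: "E (xs ! k) (xs ! Suc k)" using w l kd unfolding walk_def by auto
      have wz: "walk V E ?zs" using walk_append[OF ne _ walk_drop[OF w] ] ys e lastys hdd l kd by auto
      have "hd ?zs = hd xs" using ne ys by simp
      moreover have "last ?zs = last xs" using dne by simp
      ultimately have "Suc d \<le> length ?zs" using g wz unfolding geodesic_iff by blast
      moreover have "length ?zs < Suc d" using short l kd by simp
      ultimately show False by simp
    qed
  qed
qed

lemma geodesic0: "x \<in> V \<Longrightarrow> geodesic V E 0 [x]"
  unfolding geodesic_iff by (auto simp: walk_def Suc_le_eq)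

lemma geodesic1: "x \<in> V \<Longrightarrow> y \<in> V \<Longrightarrow> E x y \<Longrightarrow> x \<noteq> y \<Longrightarrow> geodesic V E 1 [x, y]"
  unfolding geodesic_iff
  apply (auto)
  subgoal for ys by (cases ys) (auto simp: walk_def Suc_le_eq split: if_splits)
  done

lemma geodesic2: "x \<in> V \<Longrightarrow> a \<in> V \<Longrightarrow> y \<in> V \<Longrightarrow> E x a \<Longrightarrow> E a y \<Longrightarrow> x \<noteq> y \<Longrightarrow> \<not> E x y
   \<Longrightarrow> geodesic V E 2 [x, a, y]"
  unfolding geodesic_iff
  apply (auto simp: numeral_2_eq_2)
  subgoal for ys
    apply (cases ys, simp add: walk_def)
    subgoal for p ps by (cases ps) (auto simp: walk_def Suc_le_eq split: if_splits)
    done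
  done

lemma reach:
  assumes c: "connected_graph V E" and x: "x \<in> V" "x \<in> S"
    and cl: "\<And>y y'. y \<in> S \<Longrightarrow> y \<in> V \<Longrightarrow> E y y' \<Longrightarrow> y' \<in> S"
  shows "V \<subseteq> S"
proof
  fix v assume v: "v \<in> V"
  obtain xs where xs: "walk V E xs" "hd xs = x" "last xs = v" using c x v unfolding connected_graph_def by blast
  have "\<forall>i<length xs. xs ! i \<in> S"
  proof (intro allI)
    fix i show "i < length xs \<longrightarrow> xs ! i \<in> S"
    proof (induction i)
      case 0 then show ?case using xs x by (auto simp: hd_conv_nth walk_def)
    next
      case (Suc i)
      show ?case
      proof
        assume "Suc i < length xs"
        then have "E (xs ! i) (xs ! Suc i)" "xs ! i \<in> V" "xs ! i \<in> S" using xs Suc unfolding walk_def by auto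
        then show "xs ! Suc i \<in> S" using cl by blast
      qed
    qed
  qed
  then show "v \<in> S" using xs by (metis last_conv_nth walk_def diff_less length_greater_0_conv zero_less_one)
qed



locale setting =
  fixes V :: "'a set" and E :: "'a \<Rightarrow> 'a \<Rightarrow> bool" and G N :: "('a \<Rightarrow> 'a) set"
  assumes sg: "simple_graph V E" and ag: "aut_group V E G" and ns: "normal_subgroup V N G"
begin

lemma finV: "finite V" using sg by (simp add: simple_graph_def)
lemma EV: "E u v \<Longrightarrow> u \<in> V \<and> v \<in> V" using sg by (simp add: simple_graph_def)
lemma Esym: "E u v \<Longrightarrow> E v u" using sg by (simp add: simple_graph_def)
lemma Eirr: "\<not> E u u" using sg by (simp add: simple_graph_def)
lemma Ene: "E u v \<Longrightarrow> u \<noteq> v" using Eirr by auto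

lemma NG: "N \<subseteq> G" using ns by (simp add: normal_subgroup_def)
lemma G_perm: "g \<in> G \<Longrightarrow> perm_on V g" using ag by (simp add: aut_group_def perm_group_def)
lemma G_V: "g \<in> G \<Longrightarrow> x \<in> V \<Longrightarrow> g x \<in> V"
  using G_perm by (auto simp: perm_on_def bij_betw_def)
lemma G_inj: "g \<in> G \<Longrightarrow> inj_on g V"
  using G_perm by (auto simp: perm_on_def bij_betw_def)
lemma G_surj: "g \<in> G \<Longrightarrow> g ` V = V"
  using G_perm by (auto simp: perm_on_def bij_betw_def)
lemma G_edge_iff: "g \<in> G \<Longrightarrow> u \<in> V \<Longrightarrow> v \<in> V \<Longrightarrow> E (g u) (g v) \<longleftrightarrow> E u v"
  using ag unfolding aut_group_def by blast
lemma G_edge: "g \<in> G \<Longrightarrow> E u v \<Longrightarrow> E (g u) (g v)"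
proof -
  assume g: "g \<in> G" and e: "E u v"
  then have "u \<in> V" "v \<in> V" using EV by auto
  then show ?thesis using G_edge_iff[OF g] e by simp
qed
lemma G_inv: "g \<in> G \<Longrightarrow> \<exists>h\<in>G. h \<circ> g = id"
  using ag by (auto simp: aut_group_def perm_group_def)
lemma G_comp: "g \<in> G \<Longrightarrow> h \<in> G \<Longrightarrow> g \<circ> h \<in> G"
  using ag by (auto simp: aut_group_def perm_group_def)
lemma G_id: "id \<in> G"
  using ag by (auto simp: aut_group_def perm_group_def)
lemma N_id: "id \<in> N"
  using ns by (auto simp: normal_subgroup_def perm_group_def)
lemma N_comp: "g \<in> N \<Longrightarrow> h \<in> N \<Longrightarrow> g \<circ> h \<in> N"
  using ns by (auto simp: normal_subgroup_def perm_group_def)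
lemma N_inv: "g \<in> N \<Longrightarrow> \<exists>h\<in>N. h \<circ> g = id"
  using ns by (auto simp: normal_subgroup_def perm_group_def)
lemma N_normal: "g \<in> G \<Longrightarrow> n \<in> N \<Longrightarrow> \<exists>n'\<in>N. g \<circ> n = n' \<circ> g"
  using ns by (auto simp: normal_subgroup_def)
lemma N_G: "n \<in> N \<Longrightarrow> n \<in> G" using NG by blast
lemma N_V: "n \<in> N \<Longrightarrow> x \<in> V \<Longrightarrow> n x \<in> V" by (rule G_V[OF N_G])
lemma N_edge: "n \<in> N \<Longrightarrow> E u v \<Longrightarrow> E (n u) (n v)" by (rule G_edge[OF N_G])

lemma G_right_inv: "g \<in> G \<Longrightarrow> h \<circ> g = id \<Longrightarrow> y \<in> V \<Longrightarrow> g (h y) = y"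
proof -
  assume g: "g \<in> G" and hg: "h \<circ> g = id" and y: "y \<in> V"
  then obtain z where "z \<in> V" "y = g z" using G_surj by blast
  have "h (g z) = z" using hg by (simp add: fun_eq_iff)
  then show "g (h y) = y" using \<open>y = g z\<close> by simp
qed

lemma orbit_self: "x \<in> orbit N x"
  using N_id unfolding orbit_def by (metis id_apply image_eqI)

lemma orbit_sub: "x \<in> V \<Longrightarrow> orbit N x \<subseteq> V"
  using N_V unfolding orbit_def by auto

lemma orbit_trans: "y \<in> orbit N x \<Longrightarrow> orbit N y \<subseteq> orbit N x"
proof
  fix z assume "y \<in> orbit N x" "z \<in> orbit N y"
  then obtain n m where "n \<in> N" "y = n x" "m \<in> N" "z = m y" unfolding orbit_def by auto
  then have "z = (m \<circ> n) x" "m \<circ> n \<in> N" using N_comp[of m n] by auto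
  then show "z \<in> orbit N x" unfolding orbit_def by blast
qed

lemma orbit_sym: "y \<in> orbit N x \<Longrightarrow> x \<in> orbit N y"
proof -
  assume "y \<in> orbit N x"
  then obtain n where n: "n \<in> N" "y = n x" unfolding orbit_def by auto
  then obtain h where "h \<in> N" "h \<circ> n = id" using N_inv by blast
  then have "x = h y" using n by (simp add: fun_eq_iff)
  then show "x \<in> orbit N y" unfolding orbit_def using \<open>h \<in> N\<close> by auto
qed

lemma orbit_eq: "y \<in> orbit N x \<Longrightarrow> orbit N y = orbit N x"
  using orbit_trans orbit_sym by blast

lemma orbit_eq_iff: "orbit N y = orbit N x \<longleftrightarrow> y \<in> orbit N x"
  using orbit_eq orbit_self by blast

lemma orbit_img_sub: "g \<in> G \<Longrightarrow> g ` orbit N x \<subseteq> orbit N (g x)"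
proof
  fix z assume g: "g \<in> G" and "z \<in> g ` orbit N x"
  then obtain n where n: "n \<in> N" "z = g (n x)" unfolding orbit_def by auto
  then obtain n' where "n' \<in> N" "g \<circ> n = n' \<circ> g" using N_normal g by blast
  then have "z = n' (g x)" using n by (simp add: fun_eq_iff)
  then show "z \<in> orbit N (g x)" using \<open>n' \<in> N\<close> unfolding orbit_def by auto
qed

lemma orbit_img: "g \<in> G \<Longrightarrow> x \<in> V \<Longrightarrow> g ` orbit N x = orbit N (g x)"
proof
  assume g: "g \<in> G" and x: "x \<in> V"
  show "g ` orbit N x \<subseteq> orbit N (g x)" using orbit_img_sub[OF g] .
  obtain h where h: "h \<in> G" "h \<circ> g = id" using G_inv g by blast
  show "orbit N (g x) \<subseteq> g ` orbit N x"
  proof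
    fix y assume y: "y \<in> orbit N (g x)"
    have yV: "y \<in> V" using subsetD[OF orbit_sub[OF G_V[OF g x]] y] .
    have "h y \<in> orbit N (h (g x))" using subsetD[OF orbit_img_sub[OF h(1)] imageI[OF y]] .
    moreover have "h (g x) = x" using h(2) by (simp add: fun_eq_iff)
    ultimately have "h y \<in> orbit N x" by simp
    moreover have "y = g (h y)" using G_right_inv[OF g h(2) yV] by simp
    ultimately show "y \<in> g ` orbit N x" by (rule rev_image_eqI)
  qed
qed

lemma so_G: "g \<in> G \<Longrightarrow> x \<in> V \<Longrightarrow> y \<in> V \<Longrightarrow> g y \<in> orbit N (g x) \<longleftrightarrow> y \<in> orbit N x"
proof -
  assume g: "g \<in> G" and x: "x \<in> V" and y: "y \<in> V"
  have "g y \<in> g ` orbit N x \<longleftrightarrow> y \<in> orbit N x"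
    using inj_on_image_mem_iff[OF G_inj[OF g] y orbit_sub[OF x]] .
  then show ?thesis using orbit_img[OF g x] by simp
qed

lemma orbit_card: "g \<in> G \<Longrightarrow> x \<in> V \<Longrightarrow> card (orbit N (g x)) = card (orbit N x)"
proof -
  assume g: "g \<in> G" and x: "x \<in> V"
  have "inj_on g (orbit N x)" using inj_on_subset[OF G_inj[OF g] orbit_sub[OF x]] .
  from card_image[OF this] show ?thesis using orbit_img[OF g x] by simp
qed

lemma orbits_fin: "finite (orbits V N)" using finV unfolding orbits_def by simp

lemma orbit_fin: "x \<in> V \<Longrightarrow> finite (orbit N x)" using finite_subset[OF orbit_sub finV] .

end


locale setting2 = setting +
  fixes s :: nat
  assumes conn: "connected_graph V E" and gt: "geodesic_transitive V E G s"
    and s2: "2 \<le> s" and intr: "\<not> transitive_on V N"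
begin

lemma geo_trans: "i \<le> s \<Longrightarrow> geodesic V E i xs \<Longrightarrow> geodesic V E i ys \<Longrightarrow> \<exists>g\<in>G. map g xs = ys"
  using gt unfolding geodesic_transitive_def by blast

lemma vtrans: "x \<in> V \<Longrightarrow> y \<in> V \<Longrightarrow> \<exists>g\<in>G. g x = y"
proof -
  assume x: "x \<in> V" and y: "y \<in> V"
  obtain g where "g \<in> G" "map g [x] = [y]" using geo_trans[OF _ geodesic0[OF x] geodesic0[OF y]] by auto
  then show ?thesis by auto
qed

lemma atrans: "E x y \<Longrightarrow> E u v \<Longrightarrow> \<exists>g\<in>G. g x = u \<and> g y = v"
proof -
  assume a: "E x y" "E u v"
  have "geodesic V E 1 [x, y]" using geodesic1 EV[OF a(1)] a(1) Ene[OF a(1)] by auto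
  moreover have "geodesic V E 1 [u, v]" using geodesic1 EV[OF a(2)] a(2) Ene[OF a(2)] by auto
  ultimately obtain g where "g \<in> G" "map g [x, y] = [u, v]" using geo_trans[of 1] s2 by force
  then show ?thesis by auto
qed

lemma len3: "length l = 3 \<Longrightarrow> \<exists>p q r. l = [p, q, r]"
  by (auto simp: numeral_3_eq_3 length_Suc_conv)

lemma ex2geo: "\<exists>x a y. E x a \<and> E a y \<and> x \<noteq> y \<and> \<not> E x y"
proof -
  obtain xs where xs: "geodesic V E s xs" using gt unfolding geodesic_transitive_def by blast
  have g: "geodesic V E 2 (take 3 xs)" using geodesic_take[OF xs s2] by (simp add: numeral_3_eq_3)
  then have l: "length (take 3 xs) = 3" and w: "walk V E (take 3 xs)"
    unfolding geodesic_def by auto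
  obtain p q r where pqr: "take 3 xs = [p, q, r]" using len3[OF l] by blast
  have H: "\<forall>ys. walk V E ys \<and> hd ys = p \<and> last ys = r \<longrightarrow> 3 \<le> length ys"
    using g unfolding geodesic_iff pqr by simp
  have w3: "walk V E [p, q, r]" using w pqr by simp
  then have "E p q" "E q r" "p \<in> V" "r \<in> V" by auto
  moreover have "p \<noteq> r"
  proof
    assume "p = r"
    then show False using H[rule_format, of "[p]"] \<open>p \<in> V\<close> by simp
  qed
  moreover have "\<not> E p r"
  proof
    assume "E p r"
    then show False using H[rule_format, of "[p, r]"] \<open>p \<in> V\<close> \<open>r \<in> V\<close> by simp
  qed
  ultimately show ?thesis by blast
qed

lemma Vne: "\<exists>x. x \<in> V" using ex2geo EV by blast

lemma indep: "E u v \<Longrightarrow> v \<notin> orbit N u"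
proof
  assume e: "E u v" and vu: "v \<in> orbit N u"
  have all: "v' \<in> orbit N u'" if ev: "E u' v'" for u' v'
  proof -
    obtain g where g: "g \<in> G" "g u = u'" "g v = v'" using atrans[OF e ev] by blast
    show ?thesis using so_G[OF g(1), of u v] EV[OF e] vu g by simp
  qed
  obtain x0 where x0: "x0 \<in> V" using Vne by blast
  have "V \<subseteq> orbit N x0"
  proof (rule reach[OF conn x0 orbit_self])
    fix y y' assume "y \<in> orbit N x0" "y \<in> V" "E y y'"
    then show "y' \<in> orbit N x0" using all orbit_eq by blast
  qed
  then have "transitive_on V N"
    unfolding transitive_on_def
  proof (intro ballI)
    fix x y assume "V \<subseteq> orbit N x0" "x \<in> V" "y \<in> V"
    then have "y \<in> orbit N x" using orbit_eq by blast
    then show "\<exists>n\<in>N. n x = y" unfolding orbit_def by auto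
  qed
  then show False using intr by blast
qed

lemma orbits_card2: "2 \<le> card (orbits V N)"
proof (rule ccontr)
  assume "\<not> 2 \<le> card (orbits V N)"
  then have c: "card (orbits V N) \<le> 1" by simp
  obtain x0 where x0: "x0 \<in> V" using Vne by blast
  have eq: "orbit N x = orbit N x0" if "x \<in> V" for x
  proof -
    have "orbit N x \<in> orbits V N" "orbit N x0 \<in> orbits V N" using that x0 unfolding orbits_def by auto
    moreover have "\<forall>a\<in>orbits V N. \<forall>b\<in>orbits V N. a = b"
      using card_le_Suc0_iff_eq[OF orbits_fin] c by simp
    ultimately show ?thesis by blast
  qed
  have "transitive_on V N" unfolding transitive_on_def
  proof (intro ballI)
    fix x y assume "x \<in> V" "y \<in> V"
    then have "orbit N y = orbit N x" using eq by simp
    then have "y \<in> orbit N x" using orbit_self by blast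
    then show "\<exists>n\<in>N. n x = y" unfolding orbit_def by auto
  qed
  then show False using intr by blast
qed

lemma bip2: "card (orbits V N) = 2 \<Longrightarrow> bipartite V E"
proof -
  assume c2: "card (orbits V N) = 2"
  then obtain A B where AB: "orbits V N = {A, B}" "A \<noteq> B" by (auto simp: card_2_iff)
  have memA: "x \<in> A \<longleftrightarrow> orbit N x = A" if x: "x \<in> V" for x
  proof
    have o: "orbit N x \<in> {A, B}" using x AB(1) unfolding orbits_def by blast
    show "orbit N x = A" if xa: "x \<in> A"
    proof (rule ccontr)
      assume "orbit N x \<noteq> A"
      then have "orbit N x = B" using o by blast
      have "A \<in> orbits V N" using AB(1) by blast
      then obtain z where "A = orbit N z" unfolding orbits_def by blast
      then have "orbit N x = A" using xa orbit_eq by blast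
      then show False using \<open>orbit N x \<noteq> A\<close> by blast
    qed
    show "x \<in> A" if "orbit N x = A" using that orbit_self by blast
  qed
  have "\<forall>u v. E u v \<longrightarrow> (u \<in> A \<longleftrightarrow> v \<notin> A)"
  proof (intro allI impI)
    fix u v assume e: "E u v"
    have uv: "u \<in> V" "v \<in> V" using EV[OF e] by auto
    have ne: "orbit N v \<noteq> orbit N u" using indep[OF e] orbit_eq_iff by blast
    have ou: "orbit N u \<in> {A, B}" "orbit N v \<in> {A, B}" using uv AB(1) unfolding orbits_def by blast+
    show "u \<in> A \<longleftrightarrow> v \<notin> A" using memA[OF uv(1)] memA[OF uv(2)] ou ne AB(2) by blast
  qed
  moreover have "A \<subseteq> V"
  proof -
    have "A \<in> orbits V N" using AB by auto
    then show ?thesis unfolding orbits_def using orbit_sub by auto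
  qed
  ultimately show ?thesis unfolding bipartite_def by blast
qed

end


context setting2
begin

lemma Kbranch:
  assumes vu: "E v u" and vw: "E v w" and uw: "u \<noteq> w" and wo: "w \<in> orbit N u"
    and c3: "3 \<le> card (orbits V N)"
  shows "graph_iso V E (Kmb_V (card (orbits V N)) (card (orbit N u))) Kmb_E \<and> 2 \<le> card (orbit N u)"
proof -
  have uV: "u \<in> V" and vV: "v \<in> V" and wV: "w \<in> V" using EV vu vw by auto
  have P2: "y \<in> orbit N x" if h: "E x a" "E a y" "x \<noteq> y" "\<not> E x y" for x a y
  proof -
    have "\<not> E u w" using indep wo by blast
    then have g1: "geodesic V E 2 [u, v, w]" using geodesic2[OF uV vV wV Esym[OF vu] vw uw] by simp
    have xaV: "x \<in> V" "a \<in> V" "y \<in> V" using EV h(1,2) by auto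
    have g2: "geodesic V E 2 [x, a, y]" using geodesic2[OF xaV h(1) h(2) h(3) h(4)] .
    have "\<exists>g\<in>G. map g [u, v, w] = [x, a, y]" using geo_trans[OF s2 g1 g2] .
    then obtain g where g: "g \<in> G" "map g [u, v, w] = [x, a, y]" by (elim bexE)
    then have "g u = x" "g w = y" by auto
    then show ?thesis using so_G[OF g(1) uV wV] wo by simp
  qed
  have ex_x0: "\<exists>x0 y0 z0. E x0 y0 \<and> E x0 z0 \<and> z0 \<notin> orbit N y0"
  proof (rule ccontr)
    assume "\<not> (\<exists>x0 y0 z0. E x0 y0 \<and> E x0 z0 \<and> z0 \<notin> orbit N y0)"
    then have H: "\<And>x y z. E x y \<Longrightarrow> E x z \<Longrightarrow> z \<in> orbit N y" by blast
    have "V \<subseteq> orbit N v \<union> orbit N u"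
    proof (rule reach[OF conn vV])
      show "v \<in> orbit N v \<union> orbit N u" using orbit_self by blast
      fix y y' assume y: "y \<in> orbit N v \<union> orbit N u" "y \<in> V" "E y y'"
      show "y' \<in> orbit N v \<union> orbit N u"
      proof (cases "y \<in> orbit N v")
        case True
        then obtain n where n: "n \<in> N" "y = n v" unfolding orbit_def by blast
        then have "E y (n u)" using N_edge vu by simp
        then have "y' \<in> orbit N (n u)" using H y(3) by blast
        moreover have "n u \<in> orbit N u" using n(1) unfolding orbit_def by blast
        ultimately show ?thesis using orbit_eq[of "n u" u] by blast
      next
        case False
        then have "y \<in> orbit N u" using y by blast
        then obtain n where n: "n \<in> N" "y = n u" unfolding orbit_def by blast
        then have "E y (n v)" using N_edge Esym[OF vu] by simp
        then have "y' \<in> orbit N (n v)" using H y(3) by blast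
        moreover have "n v \<in> orbit N v" using n(1) unfolding orbit_def by blast
        ultimately show ?thesis using orbit_eq[of "n v" v] by blast
      qed
    qed
    then have "orbits V N \<subseteq> {orbit N v, orbit N u}" unfolding orbits_def
    proof (intro subsetI)
      fix Q assume "V \<subseteq> orbit N v \<union> orbit N u" "Q \<in> orbit N ` V"
      then obtain x where "x \<in> V" "Q = orbit N x" "x \<in> orbit N v \<or> x \<in> orbit N u" by blast
      then show "Q \<in> {orbit N v, orbit N u}" using orbit_eq[of x v] orbit_eq[of x u] by blast
    qed
    then have "card (orbits V N) \<le> card {orbit N v, orbit N u}" by (rule card_mono[rotated]) simp
    also have "\<dots> \<le> 2" by (simp add: card_insert_le_m1)
    finally show False using c3 by simp
  qed
  then obtain x0 y0 z0 where x0: "E x0 y0" "E x0 z0" "z0 \<notin> orbit N y0" by blast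
  have x0V: "x0 \<in> V" "y0 \<in> V" "z0 \<in> V" using x0 EV by auto
  have other: "\<exists>z. E a z \<and> z \<notin> orbit N y" if ay: "E a y" for a y
  proof -
    have aV: "a \<in> V" using EV ay by blast
    obtain g where g: "g \<in> G" "g x0 = a" using vtrans[OF x0V(1) aV] by blast
    have e1: "E a (g y0)" "E a (g z0)" using G_edge[OF g(1)] x0 g(2) by auto
    have nz: "g z0 \<notin> orbit N (g y0)" using so_G[OF g(1) x0V(2) x0V(3)] x0(3) by simp
    show ?thesis
    proof (cases "y \<in> orbit N (g y0)")
      case True
      then have "orbit N y = orbit N (g y0)" by (rule orbit_eq)
      then show ?thesis using e1 nz by auto
    next
      case False
      have "g y0 \<notin> orbit N y"
      proof
        assume "g y0 \<in> orbit N y"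
        then have "y \<in> orbit N (g y0)" by (rule orbit_sym)
        then show False using False by simp
      qed
      then show ?thesis using e1 by blast
    qed
  qed
  have adj: "E y z" if h: "E a y" "E a z" "z \<notin> orbit N y" for a y z
  proof (rule ccontr)
    assume ne: "\<not> E y z"
    have "y \<noteq> z" using h(3) orbit_self[of y] by auto
    then have "z \<in> orbit N y" using P2[OF Esym[OF h(1)] h(2) _ ne] by blast
    then show False using h(3) by blast
  qed
  have diam2: "y = x \<or> E x y \<or> (\<exists>a. E x a \<and> E a y)" if xy: "x \<in> V" "y \<in> V" for x y
  proof -
    have "V \<subseteq> {y. y = x \<or> E x y \<or> (\<exists>a. E x a \<and> E a y)}"
    proof (rule reach[OF conn xy(1)])
      show "x \<in> {y. y = x \<or> E x y \<or> (\<exists>a. E x a \<and> E a y)}" by simp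
      fix y y' assume y: "y \<in> {y. y = x \<or> E x y \<or> (\<exists>a. E x a \<and> E a y)}" "y \<in> V" and e: "E y y'"
      show "y' \<in> {y. y = x \<or> E x y \<or> (\<exists>a. E x a \<and> E a y)}"
      proof (cases "y = x \<or> E x y")
        case True then show ?thesis using e by auto
      next
        case False
        then have yx: "y \<noteq> x" "\<not> E x y" by auto
        obtain a where a: "E x a" "E a y" using y False by auto
        show ?thesis
        proof (cases "y' = x \<or> E x y' \<or> E a y'")
          case True then show ?thesis using a by auto
        next
          case False
          then have f: "y' \<noteq> x" "\<not> E x y'" "\<not> E a y'" by auto
          have "a \<noteq> y'" using f a by auto
          then have ya: "y' \<in> orbit N a" using P2[OF a(2) e _ f(3)] by blast
          have yo: "y \<in> orbit N x" using P2[OF a yx(1)[symmetric] yx(2)] .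
          obtain z where z: "E a z" "z \<notin> orbit N x" using other[OF Esym[OF a(1)]] by blast
          have xz: "E x z" using adj[OF Esym[OF a(1)] z(1) z(2)] .
          have zy: "z \<notin> orbit N y" using z(2) orbit_eq[OF yo] by simp
          have yz: "E y z" using adj[OF a(2) z(1) zy] .
          have "z \<notin> orbit N a" using indep[OF z(1)] .
          then have "y' \<notin> orbit N z"
          proof (intro notI)
            assume "z \<notin> orbit N a" "y' \<in> orbit N z"
            have "z \<in> orbit N y'" using orbit_sym[OF \<open>y' \<in> orbit N z\<close>] .
            then show False using orbit_eq[OF ya] \<open>z \<notin> orbit N a\<close> by simp
          qed
          then have "E z y'" using adj[OF yz e] by blast
          then show ?thesis using xz by auto
        qed
      qed
    qed
    then show ?thesis using xy(2) by blast
  qed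
  have complete: "E x y \<longleftrightarrow> y \<notin> orbit N x" if xy: "x \<in> V" "y \<in> V" for x y
  proof
    show "E x y \<Longrightarrow> y \<notin> orbit N x" using indep by blast
    assume yn: "y \<notin> orbit N x"
    show "E x y"
    proof (rule ccontr)
      assume ne: "\<not> E x y"
      have "y \<noteq> x" using yn orbit_self by blast
      then obtain a where "E x a" "E a y" using diam2[OF xy] ne by blast
      then have "y \<in> orbit N x" using P2[of x a y] \<open>y \<noteq> x\<close> ne by simp
      then show False using yn by blast
    qed
  qed
  define m where "m = card (orbits V N)"
  define b where "b = card (orbit N u)"
  have cardb: "card (orbit N x) = b" if xV: "x \<in> V" for x
  proof -
    obtain g where "g \<in> G" "g u = x" using vtrans[OF uV xV] by blast
    then show ?thesis using orbit_card[of g u] uV b_def by simp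
  qed
  have b2: "2 \<le> b"
  proof -
    have "{u, w} \<subseteq> orbit N u" using wo orbit_self by blast
    then have "card {u, w} \<le> b" unfolding b_def using card_mono[OF orbit_fin[OF uV]] by simp
    then show ?thesis using uw by simp
  qed
  obtain e where e: "bij_betw e (orbits V N) {0..<m}" using ex_bij_betw_finite_nat[OF orbits_fin] unfolding m_def by (elim exE)
  have "\<forall>Q\<in>orbits V N. \<exists>h. bij_betw h Q {0..<b}"
  proof
    fix Q assume "Q \<in> orbits V N"
    then obtain x where x: "x \<in> V" "Q = orbit N x" unfolding orbits_def by blast
    then show "\<exists>h. bij_betw h Q {0..<b}" using ex_bij_betw_finite_nat[OF orbit_fin[OF x(1)]] cardb[OF x(1)] by simp
  qed
  then have "\<exists>hh. \<forall>Q\<in>orbits V N. bij_betw (hh Q) Q {0..<b}" by (rule bchoice)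
  then obtain hh where hh0: "\<forall>Q\<in>orbits V N. bij_betw (hh Q) Q {0..<b}" by (elim exE)
  have hh: "bij_betw (hh Q) Q {0..<b}" if "Q \<in> orbits V N" for Q using hh0 that by blast
  define f where "f x = (e (orbit N x), hh (orbit N x) x)" for x
  have oV: "orbit N x \<in> orbits V N" if "x \<in> V" for x using that unfolding orbits_def by blast
  have inj: "inj_on f V"
  proof (rule inj_onI)
    fix x y assume x: "x \<in> V" and y: "y \<in> V" and fxy: "f x = f y"
    then have "e (orbit N x) = e (orbit N y)" unfolding f_def by simp
    then have oe: "orbit N x = orbit N y" using inj_onD[OF bij_betw_imp_inj_on[OF e] _ oV[OF x] oV[OF y]] by simp
    then have "hh (orbit N x) x = hh (orbit N x) y" using fxy unfolding f_def by simp
    moreover have "x \<in> orbit N x" "y \<in> orbit N x" using oe orbit_self[of x] orbit_self[of y] by auto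
    ultimately show "x = y" using inj_onD[OF bij_betw_imp_inj_on[OF hh[OF oV[OF x]]]] by simp
  qed
  have img: "f ` V = Kmb_V m b"
  proof
    show "f ` V \<subseteq> Kmb_V m b"
    proof
      fix p assume "p \<in> f ` V"
      then obtain x where x: "x \<in> V" "p = f x" by blast
      have "e (orbit N x) \<in> {0..<m}" using e oV[OF x(1)] unfolding bij_betw_def by blast
      moreover have "hh (orbit N x) x \<in> {0..<b}" using hh[OF oV[OF x(1)]] orbit_self unfolding bij_betw_def by blast
      ultimately show "p \<in> Kmb_V m b" unfolding Kmb_V_def f_def x(2) by simp
    qed
    show "Kmb_V m b \<subseteq> f ` V"
    proof
      fix p assume "p \<in> Kmb_V m b"
      then obtain i j where p: "p = (i, j)" "i \<in> {0..<m}" "j \<in> {0..<b}" unfolding Kmb_V_def by blast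
      have "i \<in> e ` orbits V N" using e p(2) unfolding bij_betw_def by simp
      then obtain Q where Q: "Q \<in> orbits V N" "e Q = i" by blast
      have "j \<in> hh Q ` Q" using hh[OF Q(1)] p(3) unfolding bij_betw_def by simp
      then obtain x where x: "x \<in> Q" "hh Q x = j" by blast
      obtain z where z: "z \<in> V" "Q = orbit N z" using Q(1) unfolding orbits_def by blast
      have xV: "x \<in> V" using x(1) z orbit_sub by blast
      have "orbit N x = Q" using x(1) z(2) orbit_eq[of x z] by simp
      then have "f x = p" unfolding f_def using Q x p by simp
      then show "p \<in> f ` V" using xV by blast
    qed
  qed
  have edges: "E x y \<longleftrightarrow> Kmb_E (f x) (f y)" if xy: "x \<in> V" "y \<in> V" for x y
  proof -
    have "Kmb_E (f x) (f y) \<longleftrightarrow> e (orbit N x) \<noteq> e (orbit N y)" unfolding Kmb_E_def f_def by simp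
    also have "\<dots> \<longleftrightarrow> orbit N x \<noteq> orbit N y"
      using inj_onD[OF bij_betw_imp_inj_on[OF e] _ oV[OF xy(1)] oV[OF xy(2)]] by auto
    also have "\<dots> \<longleftrightarrow> y \<notin> orbit N x" using orbit_eq_iff[of y x] by auto
    finally show ?thesis using complete[OF xy] by simp
  qed
  have "bij_betw f V (Kmb_V m b)" using inj img unfolding bij_betw_def by simp
  then have "graph_iso V E (Kmb_V m b) Kmb_E"
    unfolding graph_iso_def using edges by blast
  then show ?thesis using b2 m_def b_def by simp
qed


lemma nbr_in:
  assumes B: "B \<in> orbits V N" and C: "C \<in> orbits V N" and q: "quot_edge E B C" and v: "v \<in> B"
  shows "\<exists>w\<in>C. E v w"
proof -
  obtain p q' where pq: "p \<in> B" "q' \<in> C" "E p q'" using q unfolding quot_edge_def by blast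
  obtain z where z: "B = orbit N z" using B unfolding orbits_def by blast
  obtain z' where z': "C = orbit N z'" using C unfolding orbits_def by blast
  have "orbit N v = orbit N z" using v z orbit_eq[of v z] by simp
  moreover have "orbit N p = orbit N z" using pq(1) z orbit_eq[of p z] by simp
  ultimately have "v \<in> orbit N p" using orbit_self[of v] by simp
  then obtain n where n: "n \<in> N" "v = n p" unfolding orbit_def by blast
  have e: "E v (n q')" using N_edge[OF n(1) pq(3)] n(2) by simp
  have "n q' \<in> orbit N q'" using n(1) unfolding orbit_def by blast
  moreover have "orbit N q' = C" using pq(2) z' orbit_eq[of q' z'] by simp
  ultimately show ?thesis using e by blast
qed

lemma NK_cover:
  assumes NK: "\<And>v u w. E v u \<Longrightarrow> E v w \<Longrightarrow> w \<in> orbit N u \<Longrightarrow> u = w"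
  shows "is_cover V E N"
  unfolding is_cover_def
proof (intro ballI impI)
  fix B C v assume B: "B \<in> orbits V N" and C: "C \<in> orbits V N" and q: "quot_edge E B C" and v: "v \<in> B"
  obtain w0 where w0: "w0 \<in> C" "E v w0" using nbr_in[OF B C q v] by blast
  obtain z' where z': "C = orbit N z'" using C unfolding orbits_def by blast
  have "{w \<in> C. E v w} = {w0}"
  proof (intro set_eqI iffI)
    fix w assume w: "w \<in> {w \<in> C. E v w}"
    have "orbit N w0 = C" using w0(1) z' orbit_eq[of w0 z'] by simp
    then have "w \<in> orbit N w0" using w by simp
    then show "w \<in> {w0}" using NK[OF w0(2) _ ] w by blast
  qed (use w0 in auto)
  then show "card {w \<in> C. E v w} = 1" by simp
qed

lemma NK_semireg:
  assumes NK: "\<And>v u w. E v u \<Longrightarrow> E v w \<Longrightarrow> w \<in> orbit N u \<Longrightarrow> u = w"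
  shows "semiregular V N"
  unfolding semiregular_def
proof (intro ballI impI)
  fix n x assume n: "n \<in> N" and x: "x \<in> V" and nx: "n x = x"
  have "V \<subseteq> {y. n y = y}"
  proof (rule reach[OF conn x])
    show "x \<in> {y. n y = y}" using nx by simp
    fix y y' assume y: "y \<in> {y. n y = y}" "y \<in> V" and e: "E y y'"
    have "E y (n y')" using N_edge[OF n e] y(1) by simp
    moreover have "n y' \<in> orbit N y'" using n unfolding orbit_def by blast
    ultimately have "y' = n y'" using NK[OF e] by blast
    then show "y' \<in> {y. n y = y}" by simp
  qed
  moreover have "n y = y" if "y \<notin> V" for y
    using G_perm[OF N_G[OF n]] that unfolding perm_on_def by blast
  ultimately show "n = id" by (auto simp: fun_eq_iff)
qed

abbreviation "VN \<equiv> orbits V N"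
abbreviation "EN \<equiv> quot_edge E"

lemma oV: "x \<in> V \<Longrightarrow> orbit N x \<in> VN" unfolding orbits_def by blast

lemma proj: "walk V E xs \<Longrightarrow> walk VN EN (map (orbit N) xs)"
proof -
  assume w: "walk V E xs"
  then have "xs \<noteq> []" by (auto simp: walk_def)
  then show ?thesis using w
  proof (induction xs rule: list_nonempty_induct)
    case (single x) then show ?case using oV by simp
  next
    case (cons x xs)
    then obtain y zs where xs: "xs = y # zs" by (cases xs) auto
    have e: "E x y" and wx: "walk V E xs" and xV: "x \<in> V" using cons.prems xs by auto
    have "EN (orbit N x) (orbit N y)"
      unfolding quot_edge_def using indep[OF e] orbit_eq_iff[of y x] orbit_self[of x] orbit_self[of y] e by auto
    then show ?case using cons.IH[OF wx] xs oV[OF xV] by simp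
  qed
qed

lemma lift: "walk VN EN Bs \<Longrightarrow> v \<in> hd Bs \<Longrightarrow> \<exists>xs. walk V E xs \<and> map (orbit N) xs = Bs \<and> hd xs = v"
proof -
  assume w: "walk VN EN Bs"
  then have "Bs \<noteq> []" by (auto simp: walk_def)
  then show "v \<in> hd Bs \<Longrightarrow> ?thesis" using w
  proof (induction Bs arbitrary: v rule: list_nonempty_induct)
    case (single B)
    then have B: "B \<in> VN" "v \<in> B" by auto
    obtain z where z: "z \<in> V" "B = orbit N z" using B(1) unfolding orbits_def by blast
    have "orbit N v = B" using B(2) z orbit_eq[of v z] by simp
    moreover have "v \<in> V" using B(2) z orbit_sub by blast
    ultimately show ?case by (intro exI[of _ "[v]"]) simp
  next
    case (cons B Bs)
    then obtain C rest where Bs: "Bs = C # rest" by (cases Bs) auto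
    have B: "B \<in> VN" "EN B C" "walk VN EN Bs" using cons.prems(2) Bs by auto
    have C: "C \<in> VN" using B(3) Bs by (auto simp: walk_def)
    have v: "v \<in> B" using cons.prems(1) by simp
    obtain w where w: "w \<in> C" "E v w" using nbr_in[OF B(1) C B(2) v] by blast
    obtain xs where xs: "walk V E xs" "map (orbit N) xs = Bs" "hd xs = w"
      using cons.IH[of w] w(1) Bs B(3) by auto
    have xsne: "xs \<noteq> []" using xs(1) by (auto simp: walk_def)
    then have xs_eq: "xs = w # tl xs" using xs(3) by (cases xs) auto
    have vV: "v \<in> V" using EV[OF w(2)] by blast
    obtain z where z: "z \<in> V" "B = orbit N z" using B(1) unfolding orbits_def by blast
    have ov: "orbit N v = B" using v z orbit_eq[of v z] by simp
    have "walk V E (v # w # tl xs)" using vV w(2) xs(1) xs_eq by (metis walk_Cons2)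
    then have "walk V E (v # xs)" using xs_eq by simp
    moreover have "map (orbit N) (v # xs) = B # Bs" using ov xs(2) by simp
    ultimately show ?case by (intro exI[of _ "v # xs"]) simp
  qed
qed

lemma conn_q: "connected_graph VN EN"
  unfolding connected_graph_def
proof (intro ballI)
  fix B C assume B: "B \<in> VN" and C: "C \<in> VN"
  obtain x y where xy: "x \<in> V" "B = orbit N x" "y \<in> V" "C = orbit N y" using B C unfolding orbits_def by blast
  obtain xs where xs: "walk V E xs" "hd xs = x" "last xs = y" using conn xy unfolding connected_graph_def by blast
  have ne: "xs \<noteq> []" using xs(1) by (auto simp: walk_def)
  show "\<exists>xs. walk VN EN xs \<and> hd xs = B \<and> last xs = C"
    using proj[OF xs(1)] xs xy ne by (intro exI[of _ "map (orbit N) xs"]) (simp add: hd_map last_map)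
qed

lemma lift_geo:
  assumes g: "geodesic VN EN i Bs" and v: "v \<in> hd Bs"
  shows "\<exists>xs. geodesic V E i xs \<and> map (orbit N) xs = Bs"
proof -
  have wB: "walk VN EN Bs" and lB: "length Bs = Suc i" using g by (auto simp: geodesic_def)
  obtain xs where xs: "walk V E xs" "map (orbit N) xs = Bs" "hd xs = v" using lift[OF wB v] by blast
  have ne: "xs \<noteq> []" using xs(1) by (auto simp: walk_def)
  have "geodesic V E i xs" unfolding geodesic_iff
  proof (intro conjI allI impI)
    show "walk V E xs" by (rule xs(1))
    show "length xs = Suc i" using xs(2) lB by (metis length_map)
    fix ys assume ys: "walk V E ys \<and> hd ys = hd xs \<and> last ys = last xs"
    have yne: "ys \<noteq> []" using ys by (auto simp: walk_def)
    have "walk VN EN (map (orbit N) ys)" using proj ys by blast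
    moreover have "hd (map (orbit N) ys) = hd Bs" using ys yne ne xs(2) by (metis hd_map)
    moreover have "last (map (orbit N) ys) = last Bs" using ys yne ne xs(2) by (metis last_map)
    ultimately have "Suc i \<le> length (map (orbit N) ys)" using g unfolding geodesic_iff by blast
    then show "Suc i \<le> length ys" by simp
  qed
  then show ?thesis using xs(2) by blast
qed

lemma qact: "g \<in> G \<Longrightarrow> (\<lambda>B. if B \<in> VN then g ` B else B) \<in> quot_action V N G"
  unfolding quot_action_def by blast

lemma qact_orbit: "g \<in> G \<Longrightarrow> x \<in> V \<Longrightarrow> (\<lambda>B. if B \<in> VN then g ` B else B) (orbit N x) = orbit N (g x)"
  using oV orbit_img by simp

lemma NK_quot:
  "geodesic_transitive VN EN (quot_action V N G) (min s (diam VN EN))"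
  unfolding geodesic_transitive_def
proof (intro conjI allI impI)
  define d where "d = diam VN EN"
  let ?S = "{gdist VN EN B C | B C. B \<in> VN \<and> C \<in> VN}"
  have fin: "finite ?S" using finite_image_set2[of "\<lambda>B. B \<in> VN" "\<lambda>C. C \<in> VN" "gdist VN EN"] orbits_fin by simp
  obtain x0 where x0: "x0 \<in> V" using Vne by blast
  have "gdist VN EN (orbit N x0) (orbit N x0) \<in> ?S" using oV[OF x0] by blast
  then have "?S \<noteq> {}" by blast
  then have "d \<in> ?S" using Max_in[OF fin] unfolding d_def diam_def by blast
  then obtain B C where BC: "B \<in> VN" "C \<in> VN" "gdist VN EN B C = d" by blast
  obtain zs where zs: "walk VN EN zs" "hd zs = B" "last zs = C" "length zs = Suc (gdist VN EN B C)"
    using gdist_walk[of VN EN B C] conn_q BC unfolding connected_graph_def by blast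
  have "geodesic VN EN d zs" unfolding geodesic_def using zs BC by simp
  then have "geodesic VN EN (min s d) (take (Suc (min s d)) zs)" by (rule geodesic_take) simp
  then show "\<exists>xs. geodesic VN EN (min s (diam VN EN)) xs" unfolding d_def by blast
next
  fix i Bs Cs
  assume i: "i \<le> min s (diam VN EN)" and BC: "geodesic VN EN i Bs \<and> geodesic VN EN i Cs"
  have nonemp: "\<exists>v. v \<in> hd Xs" if "geodesic VN EN i Xs" for Xs
  proof -
    have "walk VN EN Xs" using that by (auto simp: geodesic_def)
    then have "hd Xs \<in> VN" by (cases Xs) (auto simp: walk_def)
    then obtain z where "hd Xs = orbit N z" unfolding orbits_def by blast
    then show ?thesis using orbit_self by blast
  qed
  obtain v where v: "v \<in> hd Bs" using nonemp BC by blast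
  obtain v' where v': "v' \<in> hd Cs" using nonemp BC by blast
  obtain xs where xs: "geodesic V E i xs" "map (orbit N) xs = Bs" using lift_geo BC v by blast
  obtain ys where ys: "geodesic V E i ys" "map (orbit N) ys = Cs" using lift_geo BC v' by blast
  have "i \<le> s" using i by simp
  then obtain g where g: "g \<in> G" "map g xs = ys" using geo_trans xs(1) ys(1) by blast
  have xsV: "set xs \<subseteq> V" using xs(1) by (auto simp: geodesic_def walk_def)
  let ?q = "(\<lambda>B. if B \<in> VN then g ` B else B)"
  have "map ?q Bs = map (\<lambda>x. ?q (orbit N x)) xs"
    unfolding xs(2)[symmetric] by simp
  also have "\<dots> = map (\<lambda>x. orbit N (g x)) xs"
  proof (rule map_cong[OF refl])
    fix x assume "x \<in> set xs"
    then have "x \<in> V" using xsV by blast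
    then show "?q (orbit N x) = orbit N (g x)" by (rule qact_orbit[OF g(1)])
  qed
  also have "\<dots> = map (orbit N) (map g xs)" by simp
  also have "\<dots> = Cs" using g(2) ys(2) by simp
  finally show "\<exists>g\<in>quot_action V N G. map g Bs = Cs" using qact[OF g(1)] by blast
qed

end

theorem lemma3p2:
  fixes V :: "'a set" and E :: "'a \<Rightarrow> 'a \<Rightarrow> bool"
    and G N :: "('a \<Rightarrow> 'a) set" and s :: nat
  assumes "simple_graph V E" and "connected_graph V E"
    and "aut_group V E G"
    and "s \<ge> 2" and "geodesic_transitive V E G s"
    and "normal_subgroup V N G" and "N \<noteq> {id}"
    and "\<not> transitive_on V N"
    and "\<forall>m b. m \<ge> 3 \<and> b \<ge> 2 \<longrightarrow> \<not> graph_iso V E (Kmb_V m b) Kmb_E"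
  shows "(card (orbits V N) = 2 \<and> bipartite V E)
       \<or> (card (orbits V N) \<ge> 3 \<and> semiregular V N \<and> is_cover V E N
          \<and> geodesic_transitive (orbits V N) (quot_edge E) (quot_action V N G)
               (min s (diam (orbits V N) (quot_edge E))))"
proof -
  interpret setting2 V E G N s
    using assms by (unfold_locales) auto
  have c2: "2 \<le> card (orbits V N)" by (rule orbits_card2)
  show ?thesis
  proof (cases "card (orbits V N) = 2")
    case True
    then show ?thesis using bip2 by blast
  next
    case False
    then have c3: "3 \<le> card (orbits V N)" using c2 by simp
    show ?thesis
    proof (cases "\<exists>v u w. E v u \<and> E v w \<and> u \<noteq> w \<and> w \<in> orbit N u")
      case True
      then obtain v u w where h: "E v u" "E v w" "u \<noteq> w" "w \<in> orbit N u" by blast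
      have "graph_iso V E (Kmb_V (card (orbits V N)) (card (orbit N u))) Kmb_E \<and> 2 \<le> card (orbit N u)"
        by (rule Kbranch[OF h c3])
      then show ?thesis using assms(9) c3 by blast
    next
      case False
      then have NK: "\<forall>v u w. E v u \<longrightarrow> E v w \<longrightarrow> w \<in> orbit N u \<longrightarrow> u = w" by blast
      have sr: "semiregular V N" by (rule NK_semireg) (use NK in blast)
      have cv: "is_cover V E N" by (rule NK_cover) (use NK in blast)
      show ?thesis using c3 sr cv NK_quot by blast
    qed
  qed
qed

end
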